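(* Let $Q$ be a connected quiver with two mutable vertices $1,2$ and one frozen vertex $u$, with $|b_{12}|\ge2$. Then for any infinite reduced mutation sequence $\mathbf M$, there are at most four values $\ell\ge0$ such that $Q^{(\ell)}_{\mathbf M}$ is acyclic.
   Context: A quiver is a finite directed multigraph with no loops and no oriented 2-cycles, whose vertex set is partitioned into mutable and frozen vertices. $b_{ik}$ = number of arrows $i\to k$ minus number of arrows $k\to i$. Mutation $\mu_j$ at mutable $j$: for each path $i\to j\to k$ add $b_{ij}b_{jk}$ arrows $i\to k$, reverse all arrows at $j$, cancel 2-cycles. A mutation sequence $\mathbf M=m_1m_2\cdots$ has $Q^{(0)}_{\mathbf M}=Q$, $Q^{(i)}_{\mathbf M}=\mu_{m_i}(Q^{(i-1)}_{\mathbf M})$; reduced means $m_i\ne m_{i+1}$ (so in rank 2 it alternates between $1$ and $2$). Connected: the mutable part is connected as an undirected graph and every frozen vertex is adjacent to some mutable vertex. Acyclic means the underlying directed graph has no directed cycle. *)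

theory Defs
  imports Main
begin

datatype vtx = V1 | V2 | U

definition mutable :: "vtx \<Rightarrow> bool" where
  "mutable v \<longleftrightarrow> v = V1 \<or> v = V2"

text \<open>A quiver without loops and oriented 2-cycles is determined by its exchange
  matrix b_ik = #(arrows i to k) - #(arrows k to i), which is skew-symmetric.\<close>
type_synonym quiver = "vtx \<Rightarrow> vtx \<Rightarrow> int"

definition skew :: "quiver \<Rightarrow> bool" where
  "skew B \<longleftrightarrow> (\<forall>i k. B i k = - B k i)"

text \<open>Mutation at j: for each path i to j to k add b_ij b_jk arrows i to k,
  reverse all arrows at j, cancel 2-cycles.\<close>
definition mut :: "vtx \<Rightarrow> quiver \<Rightarrow> quiver" where
  "mut j B = (\<lambda>i k. if i = j \<or> k = j then - B i k
      else B i k + max (B i j) 0 * max (B j k) 0 - max (B k j) 0 * max (B j i) 0)"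

text \<open>Q^(0) = Q, Q^(l+1) = mu_{m_{l+1}}(Q^(l)); the sequence is M 0, M 1, ...\<close>
fun mut_seq :: "(nat \<Rightarrow> vtx) \<Rightarrow> quiver \<Rightarrow> nat \<Rightarrow> quiver" where
  "mut_seq M B 0 = B"
| "mut_seq M B (Suc l) = mut (M l) (mut_seq M B l)"

definition reduced_seq :: "(nat \<Rightarrow> vtx) \<Rightarrow> bool" where
  "reduced_seq M \<longleftrightarrow> (\<forall>i. mutable (M i) \<and> M i \<noteq> M (Suc i))"

definition arrows :: "quiver \<Rightarrow> (vtx \<times> vtx) set" where
  "arrows B = {(i, k). B i k > 0}"

definition acyclic_quiver :: "quiver \<Rightarrow> bool" where
  "acyclic_quiver B \<longleftrightarrow> acyclic (arrows B)"

text \<open>Connected: mutable part connected and the frozen vertex adjacent to a mutable one.\<close>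
definition connected_quiver :: "quiver \<Rightarrow> bool" where
  "connected_quiver B \<longleftrightarrow> B V1 V2 \<noteq> 0 \<and> (B V1 U \<noteq> 0 \<or> B V2 U \<noteq> 0)"

end

theory Submission
  imports Defs
begin

definition Tx :: "int \<Rightarrow> int \<Rightarrow> int \<Rightarrow> int" where
  "Tx s x y = y + max (-s) 0 * max x 0 - max (-x) 0 * max s 0"
definition cyc :: "int \<Rightarrow> int \<Rightarrow> int \<Rightarrow> bool" where
  "cyc s x y \<longleftrightarrow> (s > 0 \<and> y > 0 \<and> x < 0) \<or> (s < 0 \<and> y < 0 \<and> x > 0)"

lemma Tx_neg: "Tx (-s) (-x) (-y) = - Tx s x y"
  unfolding Tx_def by (simp add: algebra_simps)
lemma cyc_neg2: "cyc (-s) a b = cyc s (-a) (-b)"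
  unfolding cyc_def by auto

lemma Tx_pos: "s > 0 \<Longrightarrow> Tx s x y = y - s * max (-x) 0"
  unfolding Tx_def by (simp add: algebra_simps)

lemma Tx_pos2: "s \<ge> 2 \<Longrightarrow> \<exists>p. Tx s x y = y - p \<and> p \<ge> 2 * max (-x) 0 \<and> (x \<ge> 0 \<longrightarrow> p = 0)"
proof -
  assume s: "s \<ge> 2"
  have "s * max (-x) 0 \<ge> 2 * max (-x) 0" using s by (intro mult_right_mono) auto
  moreover have "x \<ge> 0 \<longrightarrow> s * max (-x) 0 = 0" by simp
  ultimately show ?thesis using Tx_pos[of s x y] s by auto
qed

lemma good_pos:
  assumes "s \<ge> 2" "cyc s x y" "\<bar>x\<bar> \<ge> \<bar>y\<bar>"
  shows "cyc s (Tx s x y) (-x) \<and> \<bar>Tx s x y\<bar> \<ge> \<bar>x\<bar>"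
proof -
  obtain p where p: "Tx s x y = y - p" "p \<ge> 2 * max (-x) 0" using Tx_pos2[OF assms(1)] by blast
  have x: "x < 0" "y > 0" using assms unfolding cyc_def by auto
  have a: "\<bar>x\<bar> = -x" "\<bar>y\<bar> = y" "max (-x) 0 = -x" using x by auto
  have "y \<le> -x" using assms(3) a by linarith
  then have t: "Tx s x y \<le> x" using p a by linarith
  then have "\<bar>Tx s x y\<bar> = - Tx s x y" using x by linarith
  then show ?thesis using t x a assms(1) unfolding cyc_def by linarith
qed

lemma good:
  assumes "\<bar>s\<bar> \<ge> 2" "cyc s x y" "\<bar>x\<bar> \<ge> \<bar>y\<bar>"
  shows "cyc s (Tx s x y) (-x) \<and> \<bar>Tx s x y\<bar> \<ge> \<bar>x\<bar>"
proof (cases "s > 0")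
  case True
  then have "s \<ge> 2" using assms(1) by linarith
  then show ?thesis by (rule good_pos[OF _ assms(2,3)])
next
  case False
  then have s: "-s \<ge> 2" using assms(1) by linarith
  have c: "cyc (-s) (-x) (-y)" using assms(2) unfolding cyc_def by linarith
  have "\<bar>-x\<bar> \<ge> \<bar>-y\<bar>" using assms(3) by simp
  from good_pos[OF s c this] have "cyc (-s) (- Tx s x y) x \<and> \<bar>Tx s x y\<bar> \<ge> \<bar>x\<bar>"
    unfolding Tx_neg by simp
  then show ?thesis unfolding cyc_def by linarith
qed

lemma bgood_pos:
  assumes "s \<ge> 2" "cyc s (Tx s x y) (-x)" "\<bar>Tx s x y\<bar> \<le> \<bar>x\<bar>"
  shows "cyc s x y \<and> \<bar>x\<bar> \<le> \<bar>y\<bar>"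
proof -
  obtain p where p: "Tx s x y = y - p" "p \<ge> 2 * max (-x) 0" using Tx_pos2[OF assms(1)] by blast
  have x: "x < 0" "Tx s x y < 0" using assms unfolding cyc_def by auto
  have a: "\<bar>x\<bar> = -x" "\<bar>Tx s x y\<bar> = - Tx s x y" "max (-x) 0 = -x" using x by auto
  have "- Tx s x y \<le> -x" using assms(3) a by linarith
  then have y: "y \<ge> -x" using p a by linarith
  then have "\<bar>y\<bar> = y" using x by linarith
  then show ?thesis using y x a assms(1) unfolding cyc_def by linarith
qed

lemma bgood:
  assumes "\<bar>s\<bar> \<ge> 2" "cyc s (Tx s x y) (-x)" "\<bar>Tx s x y\<bar> \<le> \<bar>x\<bar>"
  shows "cyc s x y \<and> \<bar>x\<bar> \<le> \<bar>y\<bar>"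
proof (cases "s > 0")
  case True
  then have "s \<ge> 2" using assms(1) by linarith
  then show ?thesis by (rule bgood_pos[OF _ assms(2,3)])
next
  case False
  then have s: "-s \<ge> 2" using assms(1) by linarith
  have c: "cyc (-s) (Tx (-s) (-x) (-y)) (- (-x))" using assms(2) unfolding Tx_neg cyc_def by linarith
  have "\<bar>Tx (-s) (-x) (-y)\<bar> \<le> \<bar>-x\<bar>" using assms(3) unfolding Tx_neg by simp
  from bgood_pos[OF s c this] have "cyc (-s) (-x) (-y) \<and> \<bar>x\<bar> \<le> \<bar>y\<bar>" by simp
  then show ?thesis unfolding cyc_def by linarith
qed

lemma five_pos:
  assumes "s \<ge> 2" "x \<noteq> 0 \<or> y \<noteq> 0"
    "\<not> cyc s x y" "\<not> cyc s x1 (-x)" "\<not> cyc s x2 (-x1)" "\<not> cyc s x3 (-x2)" "\<not> cyc s x4 (-x3)"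
    "x1 = Tx s x y" "x2 = Tx s x1 (-x)" "x3 = Tx s x2 (-x1)" "x4 = Tx s x3 (-x2)"
  shows False
proof -
  obtain p1 where 1: "x1 = y - p1" "p1 \<ge> 2 * max (-x) 0" "x \<ge> 0 \<longrightarrow> p1 = 0" using Tx_pos2[OF assms(1)] assms by blast
  obtain p2 where 2: "x2 = -x - p2" "p2 \<ge> 2 * max (-x1) 0" "x1 \<ge> 0 \<longrightarrow> p2 = 0" using Tx_pos2[OF assms(1)] assms by blast
  obtain p3 where 3: "x3 = -x1 - p3" "p3 \<ge> 2 * max (-x2) 0" "x2 \<ge> 0 \<longrightarrow> p3 = 0" using Tx_pos2[OF assms(1)] assms by blast
  obtain p4 where 4: "x4 = -x2 - p4" "p4 \<ge> 2 * max (-x3) 0" "x3 \<ge> 0 \<longrightarrow> p4 = 0" using Tx_pos2[OF assms(1)] assms by blast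
  have c: "\<not> (y > 0 \<and> x < 0)" "\<not> (-x > 0 \<and> x1 < 0)" "\<not> (-x1 > 0 \<and> x2 < 0)"
    "\<not> (-x2 > 0 \<and> x3 < 0)" "\<not> (-x3 > 0 \<and> x4 < 0)"
    using assms(1,3-7) unfolding cyc_def by auto
  show False
  proof (cases "x < 0")
    case True
    then have "p1 \<ge> -2*x" using 1 by simp
    then show False using True c 1 by linarith
  next
    case False
    then have "p1 = 0" using 1 by simp
    then have x1: "x1 = y" using 1 by simp
    show False
    proof (cases "y < 0")
      case True
      then have "p2 \<ge> -2*y" using 2 x1 by simp
      then show False using True c 2 x1 by linarith
    next
      case False
      then have "p2 = 0" using 2 x1 by simp
      then have x2: "x2 = -x" using 2 by simp
      show False
      proof (cases "x > 0")
        case True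
        then have "p3 \<ge> 2*x" using 3 x2 by simp
        then show False using True c 3 x1 x2 \<open>\<not> y < 0\<close> by linarith
      next
        case False
        then have x0: "x = 0" using \<open>\<not> x < 0\<close> by simp
        then have y0: "y > 0" using assms(2) \<open>\<not> y < 0\<close> by simp
        then have "p3 = 0" using 3 x2 x0 by simp
        then have x3: "x3 = -y" using 3 x1 by simp
        then have "p4 \<ge> 2*y" using 4 y0 by simp
        then show False using c 4 x3 x2 x0 y0 by linarith
      qed
    qed
  qed
qed

lemma five:
  assumes "\<bar>s\<bar> \<ge> 2" "x \<noteq> 0 \<or> y \<noteq> 0"
    "\<not> cyc s x y" "\<not> cyc s x1 (-x)" "\<not> cyc s x2 (-x1)" "\<not> cyc s x3 (-x2)" "\<not> cyc s x4 (-x3)"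
    "x1 = Tx s x y" "x2 = Tx s x1 (-x)" "x3 = Tx s x2 (-x1)" "x4 = Tx s x3 (-x2)"
  shows False
proof (cases "s > 0")
  case True thus ?thesis using five_pos[of s x y x1 x2 x3 x4] assms by auto
next
  case False
  hence "-s \<ge> 2" using assms by auto
  from five_pos[OF this, of "-x" "-y" "-x1" "-x2" "-x3" "-x4"] show ?thesis using assms
    by (simp add: Tx_neg[symmetric] cyc_neg2)
qed


definition oth :: "vtx \<Rightarrow> vtx" where "oth v = (if v = V1 then V2 else V1)"

lemma skew_mut:
  assumes "skew B" shows "skew (mut j B)"
  unfolding skew_def
proof (intro allI)
  fix i k
  have h: "B k i = - B i k" "B j i = - B i j" "B k j = - B j k"
    using assms unfolding skew_def by blast+
  show "mut j B i k = - mut j B k i" unfolding mut_def using h by (simp add: algebra_simps)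
qed

lemma skew_seq: "skew B \<Longrightarrow> skew (mut_seq M B l)"
  by (induction l) (auto simp: skew_mut)

lemma red: "reduced_seq M \<Longrightarrow> M (Suc l) = oth (M l) \<and> (M l = V1 \<or> M l = V2)"
  unfolding reduced_seq_def mutable_def oth_def by (metis (full_types) vtx.exhaust)

lemma cyc_not_acyc:
  assumes "skew Q" "j = V1 \<or> j = V2" "cyc (Q j (oth j)) (Q j U) (Q (oth j) U)"
  shows "\<not> acyclic_quiver Q"
proof -
  have sk: "\<And>a b. Q a b = - Q b a" using assms(1) unfolding skew_def by blast
  have "(j, j) \<in> (arrows Q)\<^sup>+"
  proof (cases "Q j (oth j) > 0")
    case True
    then have "(j, oth j) \<in> arrows Q" "(oth j, U) \<in> arrows Q" "(U, j) \<in> arrows Q"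
      using assms(3) sk[of U j] unfolding cyc_def arrows_def by auto
    then show ?thesis by (meson trancl.r_into_trancl trancl_into_trancl)
  next
    case False
    then have "(j, U) \<in> arrows Q" "(U, oth j) \<in> arrows Q" "(oth j, j) \<in> arrows Q"
      using assms(3) sk[of U "oth j"] sk[of "oth j" j] unfolding cyc_def arrows_def by auto
    then show ?thesis by (meson trancl.r_into_trancl trancl_into_trancl)
  qed
  then show ?thesis unfolding acyclic_quiver_def acyclic_def by blast
qed

lemma oth_oth: "j = V1 \<or> j = V2 \<Longrightarrow> oth (oth j) = j"
  unfolding oth_def by auto

lemma step:
  assumes "skew Q" "j = V1 \<or> j = V2"
  shows "mut j Q (oth j) j = Q j (oth j)"
    "mut j Q (oth j) U = Tx (Q j (oth j)) (Q j U) (Q (oth j) U)"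
    "mut j Q j U = - Q j U"
proof -
  have sk: "\<And>a b. Q a b = - Q b a" using assms(1) unfolding skew_def by blast
  have o: "oth j \<noteq> j" "oth (oth j) = j" "oth j \<noteq> U" "j \<noteq> U" using assms(2) unfolding oth_def by auto
  show "mut j Q (oth j) j = Q j (oth j)" using o sk[of "oth j" j] unfolding mut_def by simp
  show "mut j Q (oth j) U = Tx (Q j (oth j)) (Q j U) (Q (oth j) U)"
    using o sk[of "oth j" j] sk[of U j] unfolding mut_def Tx_def by simp
  show "mut j Q j U = - Q j U" unfolding mut_def by simp
qed

theorem mainTheorem18:
  fixes B :: quiver and M :: "nat \<Rightarrow> vtx"
  assumes "skew B"
    and "connected_quiver B"
    and "\<bar>B V1 V2\<bar> \<ge> 2"
    and "reduced_seq M"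
  shows "finite {l. acyclic_quiver (mut_seq M B l)} \<and> card {l. acyclic_quiver (mut_seq M B l)} \<le> 4"
proof -
  define Q where "Q = mut_seq M B"
  define sv where "sv l = Q l (M l) (oth (M l))" for l
  define xv where "xv l = Q l (M l) U" for l
  define yv where "yv l = Q l (oth (M l)) U" for l
  define C where "C l = cyc (sv l) (xv l) (yv l)" for l
  have sk: "skew (Q l)" for l unfolding Q_def using skew_seq assms(1) by blast
  have mj: "M l = V1 \<or> M l = V2" for l using red[OF assms(4)] by blast
  have Ms: "M (Suc l) = oth (M l)" for l using red[OF assms(4)] by blast
  have QS: "Q (Suc l) = mut (M l) (Q l)" for l unfolding Q_def by simp
  have st: "sv (Suc l) = sv l" "xv (Suc l) = Tx (sv l) (xv l) (yv l)" "yv (Suc l) = - xv l" for l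
    unfolding sv_def xv_def yv_def QS Ms
    by (simp_all only: oth_oth[OF mj] step[OF sk mj])
  have sv0: "sv l = sv 0" for l by (induction l) (auto simp: st)
  have s2: "\<bar>sv l\<bar> \<ge> 2" for l
  proof -
    have "B V2 V1 = - B V1 V2" using assms(1) unfolding skew_def by blast
    then have "\<bar>sv 0\<bar> = \<bar>B V1 V2\<bar>" using mj[of 0] unfolding sv_def Q_def oth_def
      by auto
    then show ?thesis using sv0[of l] assms(3) by simp
  qed
  have nz: "xv l \<noteq> 0 \<or> yv l \<noteq> 0" for l
  proof (induction l)
    case 0
    then show ?case using mj[of 0] assms(2) unfolding xv_def yv_def Q_def oth_def connected_quiver_def
      by auto
  next
    case (Suc l)
    then show ?case using st[of l] by (auto simp: Tx_def)
  qed
  have AN: "{l. acyclic_quiver (Q l)} \<subseteq> {l. \<not> C l}"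
    using cyc_not_acyc[OF sk mj] unfolding C_def sv_def xv_def yv_def by blast
  have fwd: "C l \<and> \<bar>xv l\<bar> \<ge> \<bar>yv l\<bar> \<Longrightarrow> C (l + d) \<and> \<bar>xv (l + d)\<bar> \<ge> \<bar>yv (l + d)\<bar>" for l d
  proof (induction d)
    case 0 then show ?case by simp
  next
    case (Suc d)
    then show ?case using good[OF s2[of "l + d"]] st[of "l + d"] unfolding C_def by auto
  qed
  have bwd: "C (l + d) \<and> \<bar>xv (l + d)\<bar> \<le> \<bar>yv (l + d)\<bar> \<Longrightarrow> C l \<and> \<bar>xv l\<bar> \<le> \<bar>yv l\<bar>" for l d
  proof (induction d)
    case 0 then show ?case by simp
  next
    case (Suc d)
    then show ?case using bgood[OF s2[of "l + d"], of "xv (l + d)" "yv (l + d)"] st[of "l + d"] unfolding C_def by auto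
  qed
  have conv: "\<not> C n" if "l1 < n" "n < l3" "\<not> C l1" "\<not> C l3" for l1 n l3
  proof
    assume Cn: "C n"
    show False
    proof (cases "\<bar>xv n\<bar> \<ge> \<bar>yv n\<bar>")
      case True
      then show False using fwd[of n "l3 - n"] Cn that by auto
    next
      case False
      then show False using bwd[of l1 "n - l1"] Cn that by auto
    qed
  qed
  have no5: "False" if "\<not> C l" "\<not> C (l+1)" "\<not> C (l+2)" "\<not> C (l+3)" "\<not> C (l+4)" for l
  proof -
    have e: "l+1 = Suc l" "l+2 = Suc (l+1)" "l+3 = Suc (l+2)" "l+4 = Suc (l+3)" by auto
    have s: "sv (l+1) = sv l" "sv (l+2) = sv l" "sv (l+3) = sv l" "sv (l+4) = sv l"
      using sv0[of "l+1"] sv0[of "l+2"] sv0[of "l+3"] sv0[of "l+4"] sv0[of l] by simp_all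
    have y: "yv (l+1) = - xv l" "yv (l+2) = - xv (l+1)" "yv (l+3) = - xv (l+2)" "yv (l+4) = - xv (l+3)"
      by (simp_all only: e st)
    have x: "xv (l+1) = Tx (sv l) (xv l) (yv l)" "xv (l+2) = Tx (sv l) (xv (l+1)) (- xv l)"
      "xv (l+3) = Tx (sv l) (xv (l+2)) (- xv (l+1))" "xv (l+4) = Tx (sv l) (xv (l+3)) (- xv (l+2))"
      by (simp_all only: e st)
    have c: "\<not> cyc (sv l) (xv l) (yv l)" "\<not> cyc (sv l) (xv (l+1)) (- xv l)"
      "\<not> cyc (sv l) (xv (l+2)) (- xv (l+1))" "\<not> cyc (sv l) (xv (l+3)) (- xv (l+2))"
      "\<not> cyc (sv l) (xv (l+4)) (- xv (l+3))"
      using that unfolding C_def s y by simp_all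
    show False by (rule five[OF s2[of l] nz[of l] c x])
  qed
  have fin: "finite {l. \<not> C l} \<and> card {l. \<not> C l} \<le> 4"
  proof (cases "{l. \<not> C l} = {}")
    case True then show ?thesis by simp
  next
    case False
    define m where "m = (LEAST l. \<not> C l)"
    have ex: "\<exists>l. \<not> C l" using False by blast
    have m: "\<not> C m" unfolding m_def by (rule LeastI_ex[OF ex])
    have sub: "{l. \<not> C l} \<subseteq> {m..<m+4}"
    proof
      fix l assume l: "l \<in> {l. \<not> C l}"
      then have lC: "\<not> C l" by blast
      then have "m \<le> l" unfolding m_def by (rule Least_le)
      moreover have "l < m + 4"
      proof (rule ccontr)
        assume "\<not> l < m + 4"
        then have h: "\<not> C (m + i)" if "i \<le> 4" "i > 0" for i
        proof (cases "m + i = l")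
          case True then show ?thesis using lC by simp
        next
          case False
          have i: "i \<le> 4" "0 < i" by (fact that)+
          have n: "\<not> l < m + 4" by fact
          have a1: "m < m + i" using i(2) by simp
          have a2: "m + i < l" using i(1) n False by simp
          show ?thesis by (rule conv[OF a1 a2 m lC])
        qed
        have f: "\<not> C (m+1)" "\<not> C (m+2)" "\<not> C (m+3)" "\<not> C (m+4)"
          using h[of 1] h[of 2] h[of 3] h[of 4] by simp_all
        show False by (rule no5[OF m f])
      qed
      ultimately show "l \<in> {m..<m+4}" by simp
    qed
    have "card {l. \<not> C l} \<le> card {m..<m+4}" by (rule card_mono[OF finite_atLeastLessThan sub])
    then show ?thesis using finite_subset[OF sub finite_atLeastLessThan] by simp
  qed
  have AN': "{l. acyclic_quiver (mut_seq M B l)} \<subseteq> {l. \<not> C l}" using AN unfolding Q_def .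
  have "card {l. acyclic_quiver (mut_seq M B l)} \<le> card {l. \<not> C l}"
    using card_mono[OF conjunct1[OF fin] AN'] .
  then show ?thesis using fin finite_subset[OF AN'] by simp
qed

end
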